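(* Let $\kappa$ be an uncountable cardinal and let $X$, $Y$ be non-trivial Banach spaces. If $X$ is $\mathrm{ASQ}_{<\kappa}$ (respectively, $\mathrm{SQ}_{<\kappa}$), then the injective tensor product $X\widehat{\otimes}_\varepsilon Y$ is $\mathrm{ASQ}_{<\kappa}$ (respectively, $\mathrm{SQ}_{<\kappa}$).
   Context: $X\widehat{\otimes}_\varepsilon Y$ is the closure, in the operator norm, of the finite-rank operators from $Y^*$ to $X$. A Banach space $Z$ is $\mathrm{ASQ}_{<\kappa}$ if for every set $A\subset S_Z$ with $|A|<\kappa$ and every $\varepsilon>0$ there exists $y\in S_Z$ with $\|x\pm y\|\le 1+\varepsilon$ for all $x\in A$; $Z$ is $\mathrm{SQ}_{<\kappa}$ if for every such $A$ there exists $y\in S_Z$ with $\|x\pm y\|\le 1$ for all $x\in A$. *)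

theory Defs
  imports "HOL-Analysis.Analysis"
begin

text \<open>Cardinals are represented as in HOL's BNF cardinal library: a cardinal is a
  relation kappa with Card_order kappa; "|A| < kappa" is (card_of A, kappa) in ordLess.\<close>

text \<open>ASQ_{<kappa} for a (closed) linear subspace Z of a real normed space,
  with the norm inherited from the ambient space.\<close>
definition ASQ_lt :: "'c rel \<Rightarrow> 'a::real_normed_vector set \<Rightarrow> bool" where
  "ASQ_lt \<kappa> Z \<longleftrightarrow>
     (\<forall>A. A \<subseteq> Z \<inter> sphere 0 1 \<longrightarrow> (card_of A, \<kappa>) \<in> ordLess \<longrightarrow>
        (\<forall>\<epsilon>>0. \<exists>y\<in>Z \<inter> sphere 0 1. \<forall>x\<in>A. norm (x + y) \<le> 1 + \<epsilon> \<and> norm (x - y) \<le> 1 + \<epsilon>))"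

definition SQ_lt :: "'c rel \<Rightarrow> 'a::real_normed_vector set \<Rightarrow> bool" where
  "SQ_lt \<kappa> Z \<longleftrightarrow>
     (\<forall>A. A \<subseteq> Z \<inter> sphere 0 1 \<longrightarrow> (card_of A, \<kappa>) \<in> ordLess \<longrightarrow>
        (\<exists>y\<in>Z \<inter> sphere 0 1. \<forall>x\<in>A. norm (x + y) \<le> 1 \<and> norm (x - y) \<le> 1))"

definition finite_rank :: "('a::real_normed_vector \<Rightarrow>\<^sub>L 'b::real_normed_vector) \<Rightarrow> bool" where
  "finite_rank T \<longleftrightarrow> (\<exists>F. finite F \<and> range (blinfun_apply T) \<subseteq> span F)"

text \<open>Injective tensor product of X and Y: the operator-norm closure of the finite-rank
  operators from the dual Y* = ('b \<Rightarrow>L real) to X.\<close>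
definition inj_tensor :: "('a::real_normed_vector) itself \<Rightarrow> ('b::real_normed_vector) itself
    \<Rightarrow> (('b \<Rightarrow>\<^sub>L real) \<Rightarrow>\<^sub>L 'a) set" where
  "inj_tensor _ _ = closure {T. finite_rank T}"

end

theory Submission
  imports Defs
begin


definition goodG :: "'b::real_normed_vector \<Rightarrow> ('b \<times> real) set \<Rightarrow> bool" where
  "goodG y1 G \<longleftrightarrow> (\<forall>x a y b. (x,a)\<in>G \<longrightarrow> (y,b)\<in>G \<longrightarrow> (x+y,a+b)\<in>G)
     \<and> (\<forall>x a c. (x,a)\<in>G \<longrightarrow> (c *\<^sub>R x, c*a)\<in>G)
     \<and> (\<forall>x a. (x,a)\<in>G \<longrightarrow> a \<le> norm x) \<and> (y1, norm y1) \<in> G"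

lemma goodG_add: "goodG y1 G \<Longrightarrow> (x,a)\<in>G \<Longrightarrow> (y,b)\<in>G \<Longrightarrow> (x+y,a+b)\<in>G"
  unfolding goodG_def by blast
lemma goodG_sc: "goodG y1 G \<Longrightarrow> (x,a)\<in>G \<Longrightarrow> (c *\<^sub>R x, c*a)\<in>G"
  unfolding goodG_def by blast
lemma goodG_dom: "goodG y1 G \<Longrightarrow> (x,a)\<in>G \<Longrightarrow> a \<le> norm x"
  unfolding goodG_def by blast
lemma goodG_y1: "goodG y1 G \<Longrightarrow> (y1, norm y1)\<in>G"
  unfolding goodG_def by blast

lemma goodG_fun:
  assumes "goodG y1 G" "(x,a)\<in>G" "(x,b)\<in>G" shows "a = b"
proof -
  have "(x + (-1) *\<^sub>R x, a + (-1)*b) \<in> G" "(x + (-1) *\<^sub>R x, b + (-1)*a) \<in> G"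
    using assms unfolding goodG_def by blast+
  hence "a - b \<le> 0" "b - a \<le> 0" using assms(1) unfolding goodG_def by fastforce+
  thus ?thesis by simp
qed

lemma goodG_extend:
  assumes g: "goodG y1 M" and z: "\<forall>a. (z,a) \<notin> M"
  shows "\<exists>M'. goodG y1 M' \<and> M \<subset> M'"
proof -
  define S where "S = {a - norm (x - z) | x a. (x,a) \<in> M}"
  have add: "\<And>x a y b. (x,a)\<in>M \<Longrightarrow> (y,b)\<in>M \<Longrightarrow> (x+y,a+b)\<in>M"
   and sc: "\<And>x a c. (x,a)\<in>M \<Longrightarrow> (c *\<^sub>R x, c*a)\<in>M"
   and dom: "\<And>x a. (x,a)\<in>M \<Longrightarrow> a \<le> norm x" and y1: "(y1, norm y1) \<in> M"
    using g unfolding goodG_def by blast+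
  have key: "a - norm (x - z) \<le> norm (y + z) - b" if "(x,a)\<in>M" "(y,b)\<in>M" for x a y b
  proof -
    have "a + b \<le> norm (x + y)" using dom add that by blast
    also have "norm (x + y) \<le> norm (x - z) + norm (y + z)"
      using norm_triangle_ineq[of "x - z" "y + z"] by simp
    finally show ?thesis by simp
  qed
  have Sne: "S \<noteq> {}" using y1 S_def by blast
  have Sbd: "bdd_above S" unfolding S_def bdd_above_def
    using key[OF _ y1] by blast
  define r where "r = Sup S"
  have r1: "a - norm (x - z) \<le> r" if "(x,a)\<in>M" for x a
    unfolding r_def using Sbd that S_def by (auto intro!: cSup_upper)
  have r2: "r \<le> norm (y + z) - b" if "(y,b)\<in>M" for y b
    unfolding r_def using Sne key that S_def by (auto intro!: cSup_least)
  define M' where "M' = {(x + t *\<^sub>R z, a + t * r) | x a t. (x,a) \<in> M}"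
  have "goodG y1 M'"
    unfolding goodG_def
  proof (intro conjI allI impI)
    fix x a y b assume "(x,a)\<in>M'" "(y,b)\<in>M'"
    then obtain x1 a1 t1 x2 a2 t2 where "(x1,a1)\<in>M" "(x2,a2)\<in>M" "x = x1 + t1 *\<^sub>R z"
      "a = a1 + t1 * r" "y = x2 + t2 *\<^sub>R z" "b = a2 + t2 * r" unfolding M'_def by blast
    moreover have "(x1+x2, a1+a2) \<in> M" using add calculation by blast
    moreover have "(x+y, a+b) = ((x1+x2) + (t1+t2) *\<^sub>R z, (a1+a2) + (t1+t2)*r)"
      using calculation by (simp add: algebra_simps)
    ultimately show "(x+y, a+b) \<in> M'" unfolding M'_def by blast
  next
    fix x a c assume "(x,a)\<in>M'"
    then obtain x1 a1 t1 where "(x1,a1)\<in>M" "x = x1 + t1 *\<^sub>R z" "a = a1 + t1 * r"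
      unfolding M'_def by blast
    moreover have "(c *\<^sub>R x1, c*a1) \<in> M" using sc calculation by blast
    moreover have "(c *\<^sub>R x, c*a) = (c *\<^sub>R x1 + (c*t1) *\<^sub>R z, c*a1 + (c*t1)*r)"
      using calculation by (simp add: algebra_simps)
    ultimately show "(c *\<^sub>R x, c*a) \<in> M'" unfolding M'_def by blast
  next
    fix x a assume "(x,a)\<in>M'"
    then obtain x1 a1 t where m: "(x1,a1)\<in>M" and xa: "x = x1 + t *\<^sub>R z" "a = a1 + t * r"
      unfolding M'_def by blast
    consider "t = 0" | "t > 0" | "t < 0" by linarith
    then show "a \<le> norm x"
    proof cases
      case 1 then show ?thesis using dom m xa by simp
    next
      case 2
      have "((1/t) *\<^sub>R x1, (1/t)*a1) \<in> M" using sc m by blast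
      from r2[OF this] have "r \<le> norm ((1/t) *\<^sub>R x1 + z) - (1/t)*a1" .
      hence "t * r \<le> t * (norm ((1/t) *\<^sub>R x1 + z) - (1/t)*a1)"
        using 2 by (simp add: mult_left_mono)
      also have "\<dots> = norm (t *\<^sub>R ((1/t) *\<^sub>R x1 + z)) - a1" using 2
        by (simp add: right_diff_distrib)
      also have "t *\<^sub>R ((1/t) *\<^sub>R x1 + z) = x1 + t *\<^sub>R z" using 2
        by (simp add: scaleR_add_right)
      finally show ?thesis using xa by simp
    next
      case 3
      define s where "s = -t"
      have s: "s > 0" using 3 s_def by simp
      have "((1/s) *\<^sub>R x1, (1/s)*a1) \<in> M" using sc m by blast
      from r1[OF this] have "(1/s)*a1 - norm ((1/s) *\<^sub>R x1 - z) \<le> r" .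
      hence "s * ((1/s)*a1 - norm ((1/s) *\<^sub>R x1 - z)) \<le> s * r"
        using s by (simp add: mult_left_mono)
      moreover have "s * ((1/s)*a1 - norm ((1/s) *\<^sub>R x1 - z)) = a1 - norm (s *\<^sub>R ((1/s) *\<^sub>R x1 - z))"
        using s by (simp add: right_diff_distrib)
      moreover have "s *\<^sub>R ((1/s) *\<^sub>R x1 - z) = x1 + t *\<^sub>R z" using s s_def
        by (simp add: scaleR_diff_right)
      ultimately have "a1 - norm (x1 + t *\<^sub>R z) \<le> s * r" by metis
      then show ?thesis using xa s_def by simp
    qed
  next
    have "(y1, norm y1) = (y1 + 0 *\<^sub>R z, norm y1 + 0 * r)" by simp
    then show "(y1, norm y1) \<in> M'" unfolding M'_def using y1 by blast
  qed
  moreover have "M \<subseteq> M'"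
  proof
    fix p assume "p \<in> M"
    moreover obtain x a where "p = (x,a)" by force
    moreover have "(x,a) = (x + 0 *\<^sub>R z, a + 0 * r)" by simp
    ultimately show "p \<in> M'" unfolding M'_def by blast
  qed
  moreover have "(z, r) \<in> M'"
  proof -
    have "(0 *\<^sub>R y1, 0 * norm y1) \<in> M" using sc[OF y1] .
    moreover have "(z, r) = (0 *\<^sub>R y1 + 1 *\<^sub>R z, 0 * norm y1 + 1 * r)" by simp
    ultimately show ?thesis unfolding M'_def by blast
  qed
  ultimately show ?thesis using z by blast
qed

lemma hahn_banach_norming:
  fixes y1 :: "'b::real_normed_vector"
  shows "\<exists>f::'b \<Rightarrow>\<^sub>L real. norm f \<le> 1 \<and> blinfun_apply f y1 = norm y1"
proof -
  define \<A> where "\<A> = {G. goodG y1 G}"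
  define G0 where "G0 = {(c *\<^sub>R y1, c * norm y1) | c. True}"
  have "goodG y1 G0" unfolding goodG_def
  proof (intro conjI allI impI)
    fix x a y b assume "(x,a) \<in> G0" "(y,b) \<in> G0"
    then obtain c d where "x = c *\<^sub>R y1" "a = c * norm y1" "y = d *\<^sub>R y1" "b = d * norm y1"
      unfolding G0_def by blast
    then have "(x+y, a+b) = ((c+d) *\<^sub>R y1, (c+d) * norm y1)" by (simp add: algebra_simps)
    then show "(x+y, a+b) \<in> G0" unfolding G0_def by blast
  next
    fix x a e assume "(x,a) \<in> G0"
    then obtain c where "x = c *\<^sub>R y1" "a = c * norm y1" unfolding G0_def by blast
    then have "(e *\<^sub>R x, e*a) = ((e*c) *\<^sub>R y1, (e*c) * norm y1)" by simp
    then show "(e *\<^sub>R x, e*a) \<in> G0" unfolding G0_def by blast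
  next
    fix x a assume "(x,a) \<in> G0"
    then obtain c where "x = c *\<^sub>R y1" "a = c * norm y1" unfolding G0_def by blast
    then show "a \<le> norm x" by (simp add: mult_right_mono)
  next
    have "(y1, norm y1) = (1 *\<^sub>R y1, 1 * norm y1)" by simp
    then show "(y1, norm y1) \<in> G0" unfolding G0_def by blast
  qed
  hence ne: "\<A> \<noteq> {}" unfolding \<A>_def by blast
  have ch: "\<Union>\<C> \<in> \<A>" if Cne: "\<C> \<noteq> {}" "subset.chain \<A> \<C>" for \<C>
  proof -
    have cg: "\<And>G. G \<in> \<C> \<Longrightarrow> goodG y1 G" using that unfolding subset.chain_def \<A>_def by blast
    have cc: "\<And>G H. G \<in> \<C> \<Longrightarrow> H \<in> \<C> \<Longrightarrow> G \<subseteq> H \<or> H \<subseteq> G"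
      using that unfolding subset.chain_def by blast
    show ?thesis unfolding \<A>_def mem_Collect_eq goodG_def
    proof (intro conjI allI impI)
      fix x a y b assume "(x,a) \<in> \<Union>\<C>" "(y,b) \<in> \<Union>\<C>"
      then obtain G H where GH: "G \<in> \<C>" "H \<in> \<C>" "(x,a)\<in>G" "(y,b)\<in>H" by blast
      then have "\<exists>K\<in>\<C>. (x,a)\<in>K \<and> (y,b)\<in>K" using cc[OF GH(1,2)] by blast
      then obtain K where K: "K\<in>\<C>" "(x,a)\<in>K" "(y,b)\<in>K" by blast
      have "(x+y,a+b)\<in>K" using goodG_add[OF cg[OF K(1)] K(2,3)] .
      then show "(x+y,a+b) \<in> \<Union>\<C>" using K(1) by blast
    next
      fix x a c assume "(x,a) \<in> \<Union>\<C>"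
      then obtain K where K: "K\<in>\<C>" "(x,a)\<in>K" by blast
      have "(c *\<^sub>R x, c*a)\<in>K" using goodG_sc[OF cg[OF K(1)] K(2)] .
      then show "(c *\<^sub>R x, c*a) \<in> \<Union>\<C>" using K(1) by blast
    next
      fix x a assume "(x,a) \<in> \<Union>\<C>"
      then obtain K where K: "K\<in>\<C>" "(x,a)\<in>K" by blast
      show "a \<le> norm x" using goodG_dom[OF cg[OF K(1)] K(2)] .
    next
      obtain K where K: "K\<in>\<C>" using Cne(1) by blast
      show "(y1, norm y1) \<in> \<Union>\<C>" using goodG_y1[OF cg[OF K]] K by blast
    qed
  qed
  obtain M where M: "M \<in> \<A>" "\<And>X. X \<in> \<A> \<Longrightarrow> M \<subseteq> X \<Longrightarrow> X = M"
    using subset_Zorn_nonempty[OF ne ch] by blast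
  have gM: "goodG y1 M" using M \<A>_def by blast
  have tot: "\<exists>a. (x,a) \<in> M" for x
    using goodG_extend[OF gM, of x] M unfolding \<A>_def by blast
  define f where "f x = (SOME a. (x,a) \<in> M)" for x
  have fM: "(x, f x) \<in> M" for x unfolding f_def using tot by (metis someI_ex)
  have feq: "(x,a) \<in> M \<Longrightarrow> f x = a" for x a using goodG_fun[OF gM fM] by blast
  have fadd: "f (x+y) = f x + f y" for x y using feq[OF goodG_add[OF gM fM fM]] .
  have fsc: "f (c *\<^sub>R x) = c * f x" for c x using feq[OF goodG_sc[OF gM fM]] .
  have fle: "f x \<le> norm x" for x using goodG_dom[OF gM fM] .
  have fabs: "\<bar>f x\<bar> \<le> norm x" for x
    using fle[of x] fle[of "(-1) *\<^sub>R x"] fsc[of "-1" x] by simp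
  have bl: "bounded_linear f"
    by (rule bounded_linear_intro[where K=1]) (use fadd fsc fabs in auto)
  have "norm (Blinfun f) \<le> 1"
    by (rule norm_blinfun_bound) (use bl fabs in \<open>auto simp: bounded_linear_Blinfun_apply\<close>)
  moreover have "blinfun_apply (Blinfun f) y1 = norm y1"
    using bl feq[OF goodG_y1[OF gM]] by (simp add: bounded_linear_Blinfun_apply)
  ultimately show ?thesis by blast
qed


lemma square_bound:
  fixes u x0 :: "'a::real_normed_vector"
  assumes "norm (u + x0) \<le> c" "norm (u - x0) \<le> c" "\<bar>s\<bar> \<le> 1" "\<bar>t\<bar> \<le> 1"
  shows "norm (s *\<^sub>R u + t *\<^sub>R x0) \<le> c"
proof -
  have c0: "0 \<le> c" using assms(1) norm_ge_zero order_trans by blast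
  have gen: "(a+b) *\<^sub>R u + (a-b) *\<^sub>R x0 = a *\<^sub>R (u + x0) + b *\<^sub>R (u - x0)" for a b :: real
    by (simp add: algebra_simps)
  have eq: "s *\<^sub>R u + t *\<^sub>R x0 = ((s+t)/2) *\<^sub>R (u + x0) + ((s-t)/2) *\<^sub>R (u - x0)"
    using gen[of "(s+t)/2" "(s-t)/2"] by (simp add: field_simps)
  have "norm (s *\<^sub>R u + t *\<^sub>R x0) \<le> norm (((s+t)/2) *\<^sub>R (u + x0)) + norm (((s-t)/2) *\<^sub>R (u - x0))"
    unfolding eq by (rule norm_triangle_ineq)
  also have "\<dots> = \<bar>s+t\<bar>/2 * norm (u + x0) + \<bar>s-t\<bar>/2 * norm (u - x0)" by simp
  also have "\<dots> \<le> \<bar>s+t\<bar>/2 * c + \<bar>s-t\<bar>/2 * c"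
    using assms(1,2) by (intro add_mono mult_left_mono) auto
  also have "\<dots> = ((\<bar>s+t\<bar> + \<bar>s-t\<bar>)/2) * c" by (simp add: algebra_simps)
  also have "\<dots> \<le> 1 * c"
    using assms(3,4) c0 by (intro mult_right_mono) (auto simp: abs_if split: if_splits)
  finally show ?thesis by simp
qed

lemma span_list:
  fixes xs :: "'a::real_vector list"
  shows "v \<in> span (set xs) \<Longrightarrow> \<exists>r. v = (\<Sum>i<length xs. r i *\<^sub>R xs!i)"
proof (induction xs arbitrary: v)
  case Nil then show ?case by simp
next
  case (Cons x xs)
  then obtain k where "v - k *\<^sub>R x \<in> span (set xs)"
    using span_breakdown_eq[of v x "set xs"] by auto
  then obtain r where r: "v - k *\<^sub>R x = (\<Sum>i<length xs. r i *\<^sub>R xs!i)" using Cons.IH by blast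
  have "(\<Sum>i<length (x#xs). (case_nat k r i) *\<^sub>R (x#xs)!i) = k *\<^sub>R x + (\<Sum>i<length xs. r i *\<^sub>R xs!i)"
    unfolding length_Cons sum.lessThan_Suc_shift by simp
  then show ?case using r by (metis add.commute diff_add_cancel)
qed

lemma rat_approx_list:
  assumes "\<eta> > 0"
  shows "\<exists>q::rat list. length q = n \<and> (\<forall>i<n. \<bar>r i - real_of_rat (q!i)\<bar> < \<eta>)"
proof -
  have "\<forall>i. \<exists>q::rat. \<bar>r i - real_of_rat q\<bar> < \<eta>"
  proof
    fix i
    obtain x where "x \<in> \<rat>" "r i < x" "x < r i + \<eta>" using Rats_dense_in_real[of "r i" "r i + \<eta>"] assms by auto
    moreover from \<open>x \<in> \<rat>\<close> obtain q where "x = real_of_rat q" by (rule Rats_cases)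
    ultimately have "\<bar>r i - real_of_rat q\<bar> < \<eta>" by (simp add: abs_less_iff)
    then show "\<exists>q::rat. \<bar>r i - real_of_rat q\<bar> < \<eta>" by blast
  qed
  then obtain Q where Q: "\<And>i. \<bar>r i - real_of_rat (Q i)\<bar> < \<eta>" by metis
  show ?thesis by (rule exI[of _ "map Q [0..<n]"]) (simp add: Q)
qed

lemma card_times_countable:
  fixes \<kappa> :: "'c rel" and A :: "'a set"
  assumes k: "Card_order \<kappa>" "(natLeq, \<kappa>) \<in> ordLess" and A: "(card_of A, \<kappa>) \<in> ordLess"
  shows "(card_of (A \<times> (UNIV::'x::countable set)), \<kappa>) \<in> ordLess"
proof (cases "finite A")
  case True
  then have "countable (A \<times> (UNIV::'x set))" by (simp add: countable_finite)
  then obtain f :: "'a \<times> 'x \<Rightarrow> nat" where "inj_on f (A \<times> UNIV)" unfolding countable_def by blast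
  then have "(card_of (A \<times> (UNIV::'x set)), card_of (UNIV::nat set)) \<in> ordLeq"
    using card_of_ordLeq[of "A \<times> (UNIV::'x set)" "UNIV::nat set"] by blast
  then have "(card_of (A \<times> (UNIV::'x set)), natLeq) \<in> ordLeq"
    using card_of_nat ordLeq_ordIso_trans by blast
  then show ?thesis using k(2) ordLeq_ordLess_trans by blast
next
  case False
  have "inj (to_nat :: 'x \<Rightarrow> nat)" by simp
  then have "(card_of (UNIV::'x set), card_of (UNIV::nat set)) \<in> ordLeq"
    using card_of_ordLeq[of "UNIV::'x set" "UNIV::nat set"] by blast
  then have "(card_of (UNIV::'x set), natLeq) \<in> ordLeq"
    using card_of_nat ordLeq_ordIso_trans by blast
  moreover have "(natLeq, card_of A) \<in> ordLeq" using False infinite_iff_natLeq_ordLeq by blast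
  ultimately have "(card_of (UNIV::'x set), card_of A) \<in> ordLeq" using ordLeq_transitive by blast
  then have "(card_of (A \<times> (UNIV::'x set)), card_of A) \<in> ordIso"
    using card_of_Times_infinite[OF False UNIV_not_empty] by blast
  then show ?thesis using A ordIso_ordLess_trans by blast
qed

lemma blinfun_unit_bound:
  fixes S :: "'x::real_normed_vector \<Rightarrow>\<^sub>L 'y::real_normed_vector"
  assumes "c \<ge> 0" "\<And>g. norm g \<le> 1 \<Longrightarrow> norm (blinfun_apply S g) \<le> c"
  shows "norm S \<le> c"
proof (rule norm_blinfun_bound[OF assms(1)])
  fix x
  show "norm (blinfun_apply S x) \<le> c * norm x"
  proof (cases "x = 0")
    case True then show ?thesis by simp
  next
    case False
    have "norm (blinfun_apply S (x /\<^sub>R norm x)) \<le> c" using assms(2) False by simp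
    moreover have "blinfun_apply S x = norm x *\<^sub>R blinfun_apply S (x /\<^sub>R norm x)"
      using False by (simp add: blinfun.scaleR_right)
    ultimately show ?thesis using False by (simp add: mult.commute mult_left_mono)
  qed
qed



definition comb :: "rat list \<Rightarrow> 'a::real_vector list \<Rightarrow> 'a" where
  "comb q xs = (\<Sum>i<length xs. real_of_rat (q!i) *\<^sub>R xs!i)"

lemma main_transfer:
  fixes \<kappa> :: "'c rel" and c :: real and A :: "(('b::banach \<Rightarrow>\<^sub>L real) \<Rightarrow>\<^sub>L 'a::banach) set"
  assumes \<kappa>: "Card_order \<kappa>" "(natLeq, \<kappa>) \<in> ordLess" and c: "c \<ge> 1"
    and b: "\<exists>y::'b. y \<noteq> 0"
    and H: "\<forall>A. A \<subseteq> sphere (0::'a) 1 \<longrightarrow> (card_of A, \<kappa>) \<in> ordLess \<longrightarrow>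
              (\<exists>x0\<in>sphere 0 1. \<forall>x\<in>A. norm (x + x0) \<le> c \<and> norm (x - x0) \<le> c)"
    and A: "A \<subseteq> inj_tensor TYPE('a) TYPE('b) \<inter> sphere 0 1" "(card_of A, \<kappa>) \<in> ordLess"
  shows "\<exists>y\<in>inj_tensor TYPE('a) TYPE('b) \<inter> sphere 0 1. \<forall>T\<in>A. norm (T + y) \<le> c \<and> norm (T - y) \<le> c"
proof -
  have approx: "\<forall>T\<in>A. \<forall>n::nat. \<exists>xs T'. norm (T - T') < inverse (real (Suc n)) \<and>
      range (blinfun_apply T') \<subseteq> span (set xs)"
  proof (intro ballI allI)
    fix T n assume "T \<in> A"
    then have "T \<in> closure {T. finite_rank T}" using A unfolding inj_tensor_def by auto
    moreover have "inverse (real (Suc n)) > 0" by simp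
    ultimately obtain T' where T': "finite_rank T'" "dist T' T < inverse (real (Suc n))"
      unfolding closure_approachable by blast
    then obtain F where F: "finite F" "range (blinfun_apply T') \<subseteq> span F" unfolding finite_rank_def by blast
    obtain xs where "set xs = F" using finite_list[OF F(1)] by blast
    moreover have "norm (T - T') < inverse (real (Suc n))" using T'(2) by (simp add: dist_norm norm_minus_commute)
    ultimately show "\<exists>xs T'. norm (T - T') < inverse (real (Suc n)) \<and> range (blinfun_apply T') \<subseteq> span (set xs)"
      using F by blast
  qed
  then obtain L TT where LT: "\<And>T n. T \<in> A \<Longrightarrow> norm (T - TT T n) < inverse (real (Suc n))"
      "\<And>T n. T \<in> A \<Longrightarrow> range (blinfun_apply (TT T n)) \<subseteq> span (set (L T n))"
    by metis
  define h where "h = (\<lambda>(T, n::nat, q::rat list). comb q (L T n) /\<^sub>R norm (comb q (L T n)))"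
  define D where "D = h ` (A \<times> (UNIV :: (nat \<times> rat list) set)) \<inter> sphere 0 1"
  have "D \<subseteq> h ` (A \<times> (UNIV :: (nat \<times> rat list) set))" unfolding D_def by blast
  then have "(card_of D, card_of (h ` (A \<times> (UNIV :: (nat \<times> rat list) set)))) \<in> ordLeq"
    by (rule card_of_mono1)
  moreover have "(card_of (h ` (A \<times> (UNIV :: (nat \<times> rat list) set))), card_of (A \<times> (UNIV :: (nat \<times> rat list) set))) \<in> ordLeq"
    by (rule card_of_image)
  ultimately have "(card_of D, card_of (A \<times> (UNIV :: (nat \<times> rat list) set))) \<in> ordLeq"
    by (rule ordLeq_transitive)
  then have Dk: "(card_of D, \<kappa>) \<in> ordLess"
    using card_times_countable[OF \<kappa> A(2)] ordLeq_ordLess_trans by blast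
  obtain x0 where x0: "x0 \<in> sphere 0 1" "\<And>d. d \<in> D \<Longrightarrow> norm (d + x0) \<le> c \<and> norm (d - x0) \<le> c"
  proof -
    have "D \<subseteq> sphere 0 1" unfolding D_def by blast
    from H[rule_format, OF this Dk] show ?thesis using that by blast
  qed
  have clD: "norm (u + x0) \<le> c \<and> norm (u - x0) \<le> c" if "u \<in> closure D" for u
  proof -
    have "closed {u. norm (u + x0) \<le> c \<and> norm (u - x0) \<le> c}"
      by (intro closed_Collect_conj closed_Collect_le continuous_intros)
    moreover have "D \<subseteq> {u. norm (u + x0) \<le> c \<and> norm (u - x0) \<le> c}" using x0(2) by blast
    ultimately have "closure D \<subseteq> {u. norm (u + x0) \<le> c \<and> norm (u - x0) \<le> c}"
      by (rule closure_minimal[rotated])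
    then show ?thesis using that by blast
  qed
  have dense: "blinfun_apply T f /\<^sub>R norm (blinfun_apply T f) \<in> closure D"
    if T: "T \<in> A" and u0: "blinfun_apply T f \<noteq> 0" and f1: "norm f \<le> 1" for T f
  proof -
    define u where "u = blinfun_apply T f"
    have u0': "u \<noteq> 0" using u0 u_def by simp
    show ?thesis unfolding u_def[symmetric] closure_approachable
    proof (intro allI impI)
      fix e :: real assume e: "e > 0"
      have "isCont (\<lambda>x. x /\<^sub>R norm x) u" using u0' by (intro continuous_intros) auto
      then obtain \<delta> where \<delta>: "\<delta> > 0" "\<And>w. dist w u < \<delta> \<Longrightarrow> dist (w /\<^sub>R norm w) (u /\<^sub>R norm u) < e"
        unfolding continuous_at_eps_delta using e by metis
      define \<delta>' where "\<delta>' = min \<delta> (norm u)"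
      have \<delta>': "\<delta>' > 0" "\<delta>' \<le> \<delta>" "\<delta>' \<le> norm u" using \<delta> u0' \<delta>'_def by auto
      obtain m where m: "m > 0" "inverse (real m) < \<delta>'/2" using ex_inverse_of_nat_less[of "\<delta>'/2"] \<delta>' by auto
      define n where "n = m - 1"
      have n: "inverse (real (Suc n)) < \<delta>'/2" using m n_def by (simp add: Suc_diff_1)
      define T' where "T' = TT T n"
      define xs where "xs = L T n"
      define v where "v = blinfun_apply T' f"
      have "v \<in> span (set xs)" using LT(2)[OF T, of n] unfolding v_def T'_def xs_def by blast
      then obtain r where r: "v = (\<Sum>i<length xs. r i *\<^sub>R xs!i)" using span_list by blast
      have "norm (v - u) = norm (blinfun_apply (T' - T) f)" unfolding v_def u_def by (simp add: blinfun.diff_left)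
      also have "\<dots> \<le> norm (T' - T) * norm f" by (rule norm_blinfun)
      also have "\<dots> \<le> norm (T' - T)" using f1 by (simp add: mult_left_le)
      also have "\<dots> < \<delta>'/2" using LT(1)[OF T, of n] n unfolding T'_def by (simp add: norm_minus_commute)
      finally have vu: "norm (v - u) < \<delta>'/2" .
      define K where "K = (\<Sum>i<length xs. norm (xs!i))"
      have K0: "K \<ge> 0" unfolding K_def by (simp add: sum_nonneg)
      define \<eta> where "\<eta> = (\<delta>'/2) / (K + 1)"
      have \<eta>: "\<eta> > 0" using \<delta>' K0 \<eta>_def by simp
      obtain q where q: "length q = length xs" "\<And>i. i < length xs \<Longrightarrow> \<bar>r i - real_of_rat (q!i)\<bar> < \<eta>"
        using rat_approx_list[OF \<eta>, of "length xs" r] by blast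
      define w where "w = comb q xs"
      have "w - v = (\<Sum>i<length xs. (real_of_rat (q!i) - r i) *\<^sub>R xs!i)"
        unfolding w_def comb_def r by (simp add: sum_subtractf scaleR_diff_left)
      then have "norm (w - v) \<le> (\<Sum>i<length xs. norm ((real_of_rat (q!i) - r i) *\<^sub>R xs!i))"
        using norm_sum[of "\<lambda>i. (real_of_rat (q!i) - r i) *\<^sub>R xs!i" "{..<length xs}"] by simp
      also have "\<dots> \<le> (\<Sum>i<length xs. \<eta> * norm (xs!i))"
      proof (rule sum_mono)
        fix i assume "i \<in> {..<length xs}"
        then have "\<bar>real_of_rat (q!i) - r i\<bar> \<le> \<eta>" using q(2)[of i] by (simp add: abs_minus_commute)
        then show "norm ((real_of_rat (q!i) - r i) *\<^sub>R xs!i) \<le> \<eta> * norm (xs!i)"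
          by (simp add: mult_right_mono)
      qed
      also have "\<dots> = \<eta> * K" unfolding K_def by (simp add: sum_distrib_left)
      also have "\<dots> < \<delta>'/2"
      proof -
        have "\<eta> * K < \<eta> * (K + 1)" using \<eta> by simp
        also have "\<eta> * (K + 1) = \<delta>'/2" unfolding \<eta>_def using K0 by (simp add: field_simps)
        finally show ?thesis .
      qed
      finally have wv: "norm (w - v) < \<delta>'/2" .
      have "norm (w - u) \<le> norm (w - v) + norm (v - u)" using norm_triangle_ineq[of "w - v" "v - u"] by simp
      then have wu: "dist w u < \<delta>'" using wv vu by (simp add: dist_norm)
      have w0: "w \<noteq> 0"
      proof
        assume "w = 0"
        then have "dist w u = norm u" by (simp add: dist_norm)
        then show False using wu \<delta>' by simp
      qed
      have "h (T, n, q) = w /\<^sub>R norm w" unfolding h_def w_def xs_def by simp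
      moreover have "w /\<^sub>R norm w \<in> sphere 0 1" using w0 by simp
      moreover have "(T, n, q) \<in> A \<times> (UNIV :: (nat \<times> rat list) set)" using T by simp
      ultimately have "w /\<^sub>R norm w \<in> D" unfolding D_def by (metis IntI image_eqI)
      moreover have "dist (w /\<^sub>R norm w) (u /\<^sub>R norm u) < e" using \<delta>(2) wu \<delta>' by simp
      ultimately show "\<exists>y\<in>D. dist y (u /\<^sub>R norm u) < e" by blast
    qed
  qed
  have bnd: "norm (blinfun_apply T f + t *\<^sub>R x0) \<le> c"
    if T: "T \<in> A" and f1: "norm f \<le> 1" and t: "\<bar>t\<bar> \<le> 1" for T f t
  proof (cases "blinfun_apply T f = 0")
    case True
    then show ?thesis using x0(1) t c by simp
  next
    case False
    define u where "u = blinfun_apply T f"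
    have nT: "norm T = 1" using T A by auto
    have "norm u \<le> norm T * norm f" unfolding u_def by (rule norm_blinfun)
    also have "\<dots> \<le> 1" using nT f1 by simp
    finally have nu: "norm u \<le> 1" .
    have "u /\<^sub>R norm u \<in> closure D" using dense[OF T False f1] u_def by simp
    from clD[OF this] have cc: "norm (u /\<^sub>R norm u + x0) \<le> c" "norm (u /\<^sub>R norm u - x0) \<le> c" by auto
    have "norm (norm u *\<^sub>R (u /\<^sub>R norm u) + t *\<^sub>R x0) \<le> c"
      by (rule square_bound[OF cc]) (use nu t in auto)
    moreover have "norm u *\<^sub>R (u /\<^sub>R norm u) = u" using False u_def by simp
    ultimately show ?thesis using u_def by simp
  qed
  obtain y1 :: 'b where "y1 \<noteq> 0" using b by blast
  define y0 where "y0 = y1 /\<^sub>R norm y1"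
  have y0: "norm y0 = 1" using \<open>y1 \<noteq> 0\<close> y0_def by simp
  obtain \<phi> :: "'b \<Rightarrow>\<^sub>L real" where \<phi>: "norm \<phi> \<le> 1" "blinfun_apply \<phi> y0 = 1"
    using hahn_banach_norming[of y0] y0 by auto
  define g where "g = (\<lambda>f::'b \<Rightarrow>\<^sub>L real. blinfun_apply f y0 *\<^sub>R x0)"
  have gbl: "bounded_linear g"
  proof (rule bounded_linear_intro[where K=1])
    fix f1 f2 :: "'b \<Rightarrow>\<^sub>L real" show "g (f1 + f2) = g f1 + g f2"
      unfolding g_def by (simp add: blinfun.add_left scaleR_add_left)
  next
    fix r and f :: "'b \<Rightarrow>\<^sub>L real" show "g (r *\<^sub>R f) = r *\<^sub>R g f"
      unfolding g_def by (simp add: blinfun.scaleR_left)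
  next
    fix f :: "'b \<Rightarrow>\<^sub>L real"
    have "\<bar>blinfun_apply f y0\<bar> \<le> norm f * norm y0" using norm_blinfun[of f y0] by simp
    then show "norm (g f) \<le> norm f * 1" unfolding g_def using x0(1) y0 by simp
  qed
  define y where "y = Blinfun g"
  have yapp: "blinfun_apply y f = blinfun_apply f y0 *\<^sub>R x0" for f
    unfolding y_def using gbl by (simp add: bounded_linear_Blinfun_apply g_def)
  have fy0: "\<bar>blinfun_apply f y0\<bar> \<le> norm f" for f :: "'b \<Rightarrow>\<^sub>L real"
    using norm_blinfun[of f y0] y0 by simp
  have "finite_rank y" unfolding finite_rank_def
    by (rule exI[of _ "{x0}"]) (auto simp: yapp span_base span_scale)
  then have yZ: "y \<in> inj_tensor TYPE('a) TYPE('b)" unfolding inj_tensor_def using closure_subset by blast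
  have "norm y \<le> 1"
    by (rule norm_blinfun_bound) (use x0(1) fy0 in \<open>auto simp: yapp\<close>)
  moreover have "1 \<le> norm y"
  proof -
    have "1 = norm (blinfun_apply y \<phi>)" using \<phi> x0(1) by (simp add: yapp)
    also have "\<dots> \<le> norm y * norm \<phi>" by (rule norm_blinfun)
    also have "\<dots> \<le> norm y" using \<phi>(1) by (simp add: mult_left_le)
    finally show ?thesis .
  qed
  ultimately have ny: "norm y = 1" by simp
  show ?thesis
  proof (rule bexI[of _ y])
    show "y \<in> inj_tensor TYPE('a) TYPE('b) \<inter> sphere 0 1" using yZ ny by simp
    show "\<forall>T\<in>A. norm (T + y) \<le> c \<and> norm (T - y) \<le> c"
    proof
      fix T assume T: "T \<in> A"
      have "norm (T + y) \<le> c"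
      proof (rule blinfun_unit_bound)
        show "0 \<le> c" using c by simp
        fix f :: "'b \<Rightarrow>\<^sub>L real" assume f: "norm f \<le> 1"
        show "norm (blinfun_apply (T + y) f) \<le> c"
          using bnd[OF T f, of "blinfun_apply f y0"] fy0[of f] f by (simp add: blinfun.add_left yapp)
      qed
      moreover have "norm (T - y) \<le> c"
      proof (rule blinfun_unit_bound)
        show "0 \<le> c" using c by simp
        fix f :: "'b \<Rightarrow>\<^sub>L real" assume f: "norm f \<le> 1"
        have "blinfun_apply (T - y) f = blinfun_apply T f + (- blinfun_apply f y0) *\<^sub>R x0"
          by (simp add: blinfun.diff_left yapp)
        then show "norm (blinfun_apply (T - y) f) \<le> c"
          using bnd[OF T f, of "- blinfun_apply f y0"] fy0[of f] f by simp
      qed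
      ultimately show "norm (T + y) \<le> c \<and> norm (T - y) \<le> c" by simp
    qed
  qed
qed


theorem corollary4p7:
  fixes \<kappa> :: "'c rel"
  assumes "Card_order \<kappa>" and "(natLeq, \<kappa>) \<in> ordLess"
    and "\<exists>x::'a::banach. x \<noteq> 0" and "\<exists>y::'b::banach. y \<noteq> 0"
  shows "(ASQ_lt \<kappa> (UNIV :: 'a set) \<longrightarrow> ASQ_lt \<kappa> (inj_tensor TYPE('a) TYPE('b)))
       \<and> (SQ_lt \<kappa> (UNIV :: 'a set) \<longrightarrow> SQ_lt \<kappa> (inj_tensor TYPE('a) TYPE('b)))"
proof (intro conjI impI)
  assume asq: "ASQ_lt \<kappa> (UNIV :: 'a set)"
  show "ASQ_lt \<kappa> (inj_tensor TYPE('a) TYPE('b))"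
    unfolding ASQ_lt_def
  proof (intro allI impI)
    fix A :: "(('b \<Rightarrow>\<^sub>L real) \<Rightarrow>\<^sub>L 'a) set" and \<epsilon> :: real
    assume A: "A \<subseteq> inj_tensor TYPE('a) TYPE('b) \<inter> sphere 0 1" "(card_of A, \<kappa>) \<in> ordLess"
      and e: "\<epsilon> > 0"
    have H: "\<forall>B. B \<subseteq> sphere (0::'a) 1 \<longrightarrow> (card_of B, \<kappa>) \<in> ordLess \<longrightarrow>
              (\<exists>x0\<in>sphere 0 1. \<forall>x\<in>B. norm (x + x0) \<le> 1 + \<epsilon> \<and> norm (x - x0) \<le> 1 + \<epsilon>)"
      using asq e unfolding ASQ_lt_def by simp
    show "\<exists>y\<in>inj_tensor TYPE('a) TYPE('b) \<inter> sphere 0 1. \<forall>x\<in>A. norm (x + y) \<le> 1 + \<epsilon> \<and> norm (x - y) \<le> 1 + \<epsilon>"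
      by (rule main_transfer[OF assms(1,2) _ assms(4) H A]) (use e in simp)
  qed
next
  assume sq: "SQ_lt \<kappa> (UNIV :: 'a set)"
  show "SQ_lt \<kappa> (inj_tensor TYPE('a) TYPE('b))"
    unfolding SQ_lt_def
  proof (intro allI impI)
    fix A :: "(('b \<Rightarrow>\<^sub>L real) \<Rightarrow>\<^sub>L 'a) set"
    assume A: "A \<subseteq> inj_tensor TYPE('a) TYPE('b) \<inter> sphere 0 1" "(card_of A, \<kappa>) \<in> ordLess"
    have H: "\<forall>B. B \<subseteq> sphere (0::'a) 1 \<longrightarrow> (card_of B, \<kappa>) \<in> ordLess \<longrightarrow>
              (\<exists>x0\<in>sphere 0 1. \<forall>x\<in>B. norm (x + x0) \<le> 1 \<and> norm (x - x0) \<le> 1)"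
      using sq unfolding SQ_lt_def by simp
    show "\<exists>y\<in>inj_tensor TYPE('a) TYPE('b) \<inter> sphere 0 1. \<forall>x\<in>A. norm (x + y) \<le> 1 \<and> norm (x - y) \<le> 1"
      by (rule main_transfer[OF assms(1,2) _ assms(4) H A]) simp
  qed
qed

end
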